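(* Let $(M,P,g)\in\mathcal W_1$, $\dim M=2n\ge4$, and let $D$ be the connection in the context. If $D$ is flat (its curvature tensor vanishes), then the Weyl tensor $W=R-\frac{1}{2(n-1)}\{\psi_1(\rho)-\frac{\tau}{2n-1}\pi_1\}$ of $\nabla$ vanishes, i.e. $(M,g)$ is conformally flat.
   Context: A Riemannian almost product manifold $(M,P,g)$: smooth manifold with $(1,1)$-tensor $P$ and Riemannian metric $g$, $P^2=\mathrm{id}$, $g(Px,Py)=g(x,y)$; here $\operatorname{tr}P=0$. $\nabla$ is the Levi-Civita connection, $F(x,y,z)=g((\nabla_xP)y,z)$, Lee form $\theta(x)=g^{ij}F(e_i,e_j,x)$, $\Omega$ with $g(\Omega,x)=\theta(x)$. Class $\mathcal W_1$: $F(x,y,z)=\frac{1}{2n}\{g(x,y)\theta(z)+g(x,z)\theta(y)-g(x,Py)\theta(Pz)-g(x,Pz)\theta(Py)\}$. $D_xy=\nabla_xy+\frac{1}{2n}\{g(x,y)P\Omega-\theta(Py)x\}$. $R(x,y,z,w)=g(\nabla_x\nabla_yz-\nabla_y\nabla_xz-\nabla_{[x,y]}z,w)$, $\rho(y,z)=g^{ij}R(e_i,y,z,e_j)$, $\tau=g^{ij}\rho(e_i,e_j)$; $\psi_1(S)(x,y,z,w)=g(y,z)S(x,w)-g(x,z)S(y,w)+S(y,z)g(x,w)-S(x,z)g(y,w)$; $\pi_1(x,y,z,w)=g(y,z)g(x,w)-g(x,z)g(y,w)$. *)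

theory Defs
  imports "HOL-Analysis.Analysis"
begin

text \<open>Local-coordinate formalization. Coordinates on an open set U of real^'i.
  Tensor fields are given by their components:
  g x i j = g(e_i,e_j) at x;  P x k j = k-th component of P(e_j) at x;
  a connection with coefficients C: D_{e_i} e_j = sum_k C x k i j e_k.\<close>

definition pd :: "'i::finite \<Rightarrow> (real^'i \<Rightarrow> real) \<Rightarrow> real^'i \<Rightarrow> real" where
  "pd k f x = frechet_derivative f (at x) (axis k 1)"

fun iter_pd :: "'i::finite list \<Rightarrow> (real^'i \<Rightarrow> real) \<Rightarrow> real^'i \<Rightarrow> real" where
  "iter_pd [] f = f"
| "iter_pd (k # ks) f = pd k (iter_pd ks f)"

definition smooth_fun_on :: "(real^'i::finite) set \<Rightarrow> (real^'i \<Rightarrow> real) \<Rightarrow> bool" where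
  "smooth_fun_on U f \<longleftrightarrow> (\<forall>ks. iter_pd ks f differentiable_on U)"

definition ginv :: "(real^'i \<Rightarrow> 'i::finite \<Rightarrow> 'i \<Rightarrow> real) \<Rightarrow> real^'i \<Rightarrow> 'i \<Rightarrow> 'i \<Rightarrow> real" where
  "ginv g x i j = matrix_inv (\<chi> a b. g x a b) $ i $ j"

text \<open>Christoffel symbols of the Levi-Civita connection: christoffel g x k i j = Gamma^k_{ij}.\<close>
definition christoffel :: "(real^'i \<Rightarrow> 'i::finite \<Rightarrow> 'i \<Rightarrow> real) \<Rightarrow> real^'i \<Rightarrow> 'i \<Rightarrow> 'i \<Rightarrow> 'i \<Rightarrow> real" where
  "christoffel g x k i j = (1/2) * (\<Sum>l\<in>UNIV. ginv g x k l *
      (pd i (\<lambda>y. g y j l) x + pd j (\<lambda>y. g y i l) x - pd l (\<lambda>y. g y i j) x))"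

text \<open>(nabla_{e_i} P)^k_j\<close>
definition covP :: "(real^'i \<Rightarrow> 'i::finite \<Rightarrow> 'i \<Rightarrow> real) \<Rightarrow> (real^'i \<Rightarrow> 'i \<Rightarrow> 'i \<Rightarrow> real)
    \<Rightarrow> real^'i \<Rightarrow> 'i \<Rightarrow> 'i \<Rightarrow> 'i \<Rightarrow> real" where
  "covP g P x i k j = pd i (\<lambda>y. P y k j) x
      + (\<Sum>l\<in>UNIV. christoffel g x k i l * P x l j)
      - (\<Sum>l\<in>UNIV. christoffel g x l i j * P x k l)"

text \<open>F(e_i,e_j,e_l) = g((nabla_{e_i} P) e_j, e_l)\<close>
definition Ften :: "(real^'i \<Rightarrow> 'i::finite \<Rightarrow> 'i \<Rightarrow> real) \<Rightarrow> (real^'i \<Rightarrow> 'i \<Rightarrow> 'i \<Rightarrow> real)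
    \<Rightarrow> real^'i \<Rightarrow> 'i \<Rightarrow> 'i \<Rightarrow> 'i \<Rightarrow> real" where
  "Ften g P x i j l = (\<Sum>k\<in>UNIV. g x k l * covP g P x i k j)"

definition lee :: "(real^'i \<Rightarrow> 'i::finite \<Rightarrow> 'i \<Rightarrow> real) \<Rightarrow> (real^'i \<Rightarrow> 'i \<Rightarrow> 'i \<Rightarrow> real)
    \<Rightarrow> real^'i \<Rightarrow> 'i \<Rightarrow> real" where
  "lee g P x l = (\<Sum>i\<in>UNIV. \<Sum>j\<in>UNIV. ginv g x i j * Ften g P x i j l)"

definition leeP :: "(real^'i \<Rightarrow> 'i::finite \<Rightarrow> 'i \<Rightarrow> real) \<Rightarrow> (real^'i \<Rightarrow> 'i \<Rightarrow> 'i \<Rightarrow> real)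
    \<Rightarrow> real^'i \<Rightarrow> 'i \<Rightarrow> real" where
  "leeP g P x l = (\<Sum>a\<in>UNIV. lee g P x a * P x a l)"

definition gP :: "(real^'i \<Rightarrow> 'i::finite \<Rightarrow> 'i \<Rightarrow> real) \<Rightarrow> (real^'i \<Rightarrow> 'i \<Rightarrow> 'i \<Rightarrow> real)
    \<Rightarrow> real^'i \<Rightarrow> 'i \<Rightarrow> 'i \<Rightarrow> real" where
  "gP g P x i j = (\<Sum>a\<in>UNIV. g x i a * P x a j)"

definition Omega :: "(real^'i \<Rightarrow> 'i::finite \<Rightarrow> 'i \<Rightarrow> real) \<Rightarrow> (real^'i \<Rightarrow> 'i \<Rightarrow> 'i \<Rightarrow> real)
    \<Rightarrow> real^'i \<Rightarrow> 'i \<Rightarrow> real" where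
  "Omega g P x k = (\<Sum>l\<in>UNIV. ginv g x k l * lee g P x l)"

definition POmega :: "(real^'i \<Rightarrow> 'i::finite \<Rightarrow> 'i \<Rightarrow> real) \<Rightarrow> (real^'i \<Rightarrow> 'i \<Rightarrow> 'i \<Rightarrow> real)
    \<Rightarrow> real^'i \<Rightarrow> 'i \<Rightarrow> real" where
  "POmega g P x k = (\<Sum>a\<in>UNIV. P x k a * Omega g P x a)"

text \<open>Class W_1 (checked on coordinate basis vectors; all terms are tensorial).\<close>
definition in_W1 :: "nat \<Rightarrow> (real^'i::finite) set \<Rightarrow> (real^'i \<Rightarrow> 'i \<Rightarrow> 'i \<Rightarrow> real)
    \<Rightarrow> (real^'i \<Rightarrow> 'i \<Rightarrow> 'i \<Rightarrow> real) \<Rightarrow> bool" where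
  "in_W1 n U g P \<longleftrightarrow> (\<forall>x\<in>U. \<forall>i j l. Ften g P x i j l =
      (1 / (2 * real n)) * (g x i j * lee g P x l + g x i l * lee g P x j
        - gP g P x i j * leeP g P x l - gP g P x i l * leeP g P x j))"

definition connD :: "nat \<Rightarrow> (real^'i \<Rightarrow> 'i::finite \<Rightarrow> 'i \<Rightarrow> real) \<Rightarrow> (real^'i \<Rightarrow> 'i \<Rightarrow> 'i \<Rightarrow> real)
    \<Rightarrow> real^'i \<Rightarrow> 'i \<Rightarrow> 'i \<Rightarrow> 'i \<Rightarrow> real" where
  "connD n g P x k i j = christoffel g x k i j
      + (1 / (2 * real n)) * (g x i j * POmega g P x k - leeP g P x j * (if k = i then 1 else 0))"

text \<open>Curvature (1,3) components of a connection C: R(e_i,e_j)e_k = sum_m curv C x m i j k e_m,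
  with R(X,Y)Z = D_X D_Y Z - D_Y D_X Z - D_[X,Y] Z.\<close>
definition curv :: "(real^'i \<Rightarrow> 'i::finite \<Rightarrow> 'i \<Rightarrow> 'i \<Rightarrow> real) \<Rightarrow> real^'i \<Rightarrow> 'i \<Rightarrow> 'i \<Rightarrow> 'i \<Rightarrow> 'i \<Rightarrow> real" where
  "curv C x m i j k = pd i (\<lambda>y. C y m j k) x - pd j (\<lambda>y. C y m i k) x
      + (\<Sum>l\<in>UNIV. C x l j k * C x m i l - C x l i k * C x m j l)"

text \<open>R(e_i,e_j,e_k,e_l) = g(R(e_i,e_j)e_k, e_l) for the Levi-Civita connection\<close>
definition Riem :: "(real^'i \<Rightarrow> 'i::finite \<Rightarrow> 'i \<Rightarrow> real) \<Rightarrow> real^'i \<Rightarrow> 'i \<Rightarrow> 'i \<Rightarrow> 'i \<Rightarrow> 'i \<Rightarrow> real" where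
  "Riem g x i j k l = (\<Sum>m\<in>UNIV. g x m l * curv (christoffel g) x m i j k)"

definition ricci :: "(real^'i \<Rightarrow> 'i::finite \<Rightarrow> 'i \<Rightarrow> real) \<Rightarrow> real^'i \<Rightarrow> 'i \<Rightarrow> 'i \<Rightarrow> real" where
  "ricci g x j k = (\<Sum>i\<in>UNIV. \<Sum>l\<in>UNIV. ginv g x i l * Riem g x i j k l)"

definition scal :: "(real^'i \<Rightarrow> 'i::finite \<Rightarrow> 'i \<Rightarrow> real) \<Rightarrow> real^'i \<Rightarrow> real" where
  "scal g x = (\<Sum>j\<in>UNIV. \<Sum>k\<in>UNIV. ginv g x j k * ricci g x j k)"

definition psi1 :: "(real^'i \<Rightarrow> 'i::finite \<Rightarrow> 'i \<Rightarrow> real) \<Rightarrow> (real^'i \<Rightarrow> 'i \<Rightarrow> 'i \<Rightarrow> real)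
    \<Rightarrow> real^'i \<Rightarrow> 'i \<Rightarrow> 'i \<Rightarrow> 'i \<Rightarrow> 'i \<Rightarrow> real" where
  "psi1 g S x i j k l = g x j k * S x i l - g x i k * S x j l + S x j k * g x i l - S x i k * g x j l"

definition pi1 :: "(real^'i \<Rightarrow> 'i::finite \<Rightarrow> 'i \<Rightarrow> real) \<Rightarrow> real^'i \<Rightarrow> 'i \<Rightarrow> 'i \<Rightarrow> 'i \<Rightarrow> 'i \<Rightarrow> real" where
  "pi1 g x i j k l = g x j k * g x i l - g x i k * g x j l"

definition weyl :: "nat \<Rightarrow> (real^'i \<Rightarrow> 'i::finite \<Rightarrow> 'i \<Rightarrow> real) \<Rightarrow> real^'i \<Rightarrow> 'i \<Rightarrow> 'i \<Rightarrow> 'i \<Rightarrow> 'i \<Rightarrow> real" where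
  "weyl n g x i j k l = Riem g x i j k l
      - (1 / (2 * (real n - 1))) * (psi1 g (ricci g) x i j k l
          - (scal g x / (2 * real n - 1)) * pi1 g x i j k l)"

definition riem_almost_product :: "(real^'i::finite) set \<Rightarrow> (real^'i \<Rightarrow> 'i \<Rightarrow> 'i \<Rightarrow> real)
    \<Rightarrow> (real^'i \<Rightarrow> 'i \<Rightarrow> 'i \<Rightarrow> real) \<Rightarrow> bool" where
  "riem_almost_product U g P \<longleftrightarrow>
     open U
   \<and> (\<forall>i j. smooth_fun_on U (\<lambda>y. g y i j) \<and> smooth_fun_on U (\<lambda>y. P y i j))
   \<and> (\<forall>x\<in>U. \<forall>i j. g x i j = g x j i)
   \<and> (\<forall>x\<in>U. \<forall>v::real^'i. v \<noteq> 0 \<longrightarrow> (\<Sum>i\<in>UNIV. \<Sum>j\<in>UNIV. v$i * v$j * g x i j) > 0)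
   \<and> (\<forall>x\<in>U. \<forall>i k. (\<Sum>j\<in>UNIV. P x i j * P x j k) = (if i = k then 1 else 0))
   \<and> (\<forall>x\<in>U. \<forall>i j. (\<Sum>a\<in>UNIV. \<Sum>b\<in>UNIV. P x a i * P x b j * g x a b) = g x i j)
   \<and> (\<forall>x\<in>U. (\<Sum>i\<in>UNIV. P x i i) = 0)"

end

theory Submission
  imports Defs
begin



lemma mult_delta[simp]: "(x::real) * (if P then 1 else 0) = (if P then x else 0)"
  "(if P then 1 else 0) * (x::real) = (if P then x else 0)" by auto
lemma mult_if0[simp]: "(x::real) * (if P then y else 0) = (if P then x*y else 0)"
  "(if P then y else 0) * (x::real) = (if P then y*x else 0)" by auto
lemma sum_if_const: "(\<Sum>b\<in>B. if P then f b else 0) = (if P then (\<Sum>b\<in>B. f b) else (0::real))" by simp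

lemma pd_at: "(f has_derivative f') (at x) \<Longrightarrow> pd k f x = f' (axis k 1)"
  unfolding pd_def by (metis frechet_derivative_at)

lemma hd_of: "f differentiable (at x) \<Longrightarrow> (f has_derivative frechet_derivative f (at x)) (at x)"
  by (simp add: frechet_derivative_works)

lemma pd_add: "f differentiable (at x) \<Longrightarrow> h differentiable (at x) \<Longrightarrow>
   pd k (\<lambda>y. f y + h y) x = pd k f x + pd k h x"
  by (subst pd_at[OF has_derivative_add[OF hd_of hd_of]]) (auto simp: pd_def)

lemma pd_diff: "f differentiable (at x) \<Longrightarrow> h differentiable (at x) \<Longrightarrow>
   pd k (\<lambda>y. f y - h y) x = pd k f x - pd k h x"
  by (subst pd_at[OF has_derivative_diff[OF hd_of hd_of]]) (auto simp: pd_def)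

lemma pd_mult: "f differentiable (at x) \<Longrightarrow> h differentiable (at x) \<Longrightarrow>
   pd k (\<lambda>y. f y * h y) x = pd k f x * h x + f x * pd k h x"
  by (subst pd_at[OF has_derivative_mult[OF hd_of hd_of]]) (auto simp: pd_def)

lemma pd_cmult: "f differentiable (at x) \<Longrightarrow>
   pd k (\<lambda>y. c * f y) x = c * pd k f x"
  by (subst pd_at[OF has_derivative_mult[OF has_derivative_const hd_of]]) (auto simp: pd_def)

lemma pd_multc: "f differentiable (at x) \<Longrightarrow>
   pd k (\<lambda>y. f y * c) x = pd k f x * c"
  by (subst pd_at[OF has_derivative_mult[OF hd_of has_derivative_const]]) (auto simp: pd_def)

lemma pd_sum: "finite A \<Longrightarrow> (\<And>a. a \<in> A \<Longrightarrow> f a differentiable (at x)) \<Longrightarrow>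
   pd k (\<lambda>y. \<Sum>a\<in>A. f a y) x = (\<Sum>a\<in>A. pd k (f a) x)"
  by (subst pd_at[OF has_derivative_sum[OF hd_of]]) (auto simp: pd_def)

lemma pd_cong: "f differentiable (at x) \<Longrightarrow> open U \<Longrightarrow> x \<in> U \<Longrightarrow> (\<And>y. y \<in> U \<Longrightarrow> f y = h y)
  \<Longrightarrow> pd k f x = pd k h x"
  unfolding pd_def using frechet_derivative_transform_within_open by metis

lemma differentiable_prod':
  fixes f :: "'j \<Rightarrow> 'a::real_normed_vector \<Rightarrow> real"
  shows "(\<And>i. i \<in> I \<Longrightarrow> f i differentiable (at x)) \<Longrightarrow> (\<lambda>x. \<Prod>i\<in>I. f i x) differentiable (at x)"
proof -
  assume H: "\<And>i. i \<in> I \<Longrightarrow> f i differentiable (at x)"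
  then have "\<forall>i\<in>I. \<exists>D. (f i has_derivative D) (at x)" unfolding differentiable_def by blast
  then obtain D where "\<forall>i\<in>I. (f i has_derivative D i) (at x)" by metis
  then show ?thesis unfolding differentiable_def using has_derivative_prod[of I f D x UNIV] by blast
qed

lemma det_differentiable:
  fixes F :: "real^'i::finite \<Rightarrow> 'i \<Rightarrow> 'i \<Rightarrow> real"
  assumes "\<And>a b. (\<lambda>y. F y a b) differentiable (at x)"
  shows "(\<lambda>y. det (\<chi> a b. F y a b)) differentiable (at x)"
  unfolding det_def
  apply (simp only: vec_lambda_beta)
  apply (rule differentiable_sum)
   apply (simp add: finite_permutations)
  apply (intro ballI differentiable_mult differentiable_const differentiable_prod' assms)
  done




lemma posdef_invertible:
  fixes A :: "real^'i::finite^'i"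
  assumes "\<forall>v::real^'i. v \<noteq> 0 \<longrightarrow> (\<Sum>i\<in>UNIV. \<Sum>j\<in>UNIV. v$i * v$j * A$i$j) > 0"
  shows "invertible A"
proof -
  have "\<forall>v. A *v v = 0 \<longrightarrow> v = 0"
  proof (intro allI impI)
    fix v assume h: "A *v v = 0"
    have "(\<Sum>i\<in>UNIV. \<Sum>j\<in>UNIV. v$i * v$j * A$i$j) = (\<Sum>i\<in>UNIV. v$i * (A *v v)$i)"
      by (simp add: matrix_vector_mult_def sum_distrib_left mult_ac)
    also have "\<dots> = 0" using h by simp
    finally show "v = 0" using assms by force
  qed
  then show ?thesis unfolding invertible_left_inverse matrix_left_invertible_ker .
qed

lemma inv_entry:
  fixes A :: "real^'i::finite^'i"
  assumes "invertible A"
  shows "matrix_inv A $ i $ j = det (\<chi> a b. if b = i then (if a = j then 1 else 0) else A$a$b) / det A"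
proof -
  have AB: "A ** matrix_inv A = mat 1" "matrix_inv A ** A = mat 1"
    using assms unfolding invertible_def matrix_inv_def by (metis (mono_tags, lifting) someI_ex)+
  have d0: "det A \<noteq> 0" using assms invertible_det_nz by blast
  let ?x = "matrix_inv A *v axis j 1"
  have "A *v ?x = axis j 1"
    by (simp add: matrix_vector_mul_assoc AB)
  then have "?x = (\<chi> k. det(\<chi> i j'. if j'=k then (axis j 1)$i else A$i$j') / det A)"
    using cramer[OF d0] by blast
  then have "?x $ i = det(\<chi> a b. if b=i then (axis j 1)$a else A$a$b) / det A" by simp
  moreover have "?x $ i = matrix_inv A $ i $ j"
    by (simp add: matrix_vector_mult_def axis_def if_distrib cong: if_cong)
  moreover have "(\<chi> a b. if b=i then (axis j 1)$a else A$a$b) = (\<chi> a b. if b = i then (if a = j then 1 else 0) else A$a$b)"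
    by (intro arg_cong[where f=vec_lambda] ext) (simp add: axis_def)
  ultimately show ?thesis by simp
qed

lemma inv_mults:
  fixes A :: "real^'i::finite^'i"
  assumes "invertible A"
  shows "(\<Sum>b\<in>UNIV. A$a$b * matrix_inv A $ b $ c) = (if a = c then 1 else 0)"
    "(\<Sum>b\<in>UNIV. matrix_inv A $ a $ b * A $ b $ c) = (if a = c then 1 else 0)"
proof -
  have AB: "A ** matrix_inv A = mat 1" "matrix_inv A ** A = mat 1"
    using assms unfolding invertible_def matrix_inv_def by (metis (mono_tags, lifting) someI_ex)+
  show "(\<Sum>b\<in>UNIV. A$a$b * matrix_inv A $ b $ c) = (if a = c then 1 else 0)"
    using arg_cong[OF AB(1), of "\<lambda>M. M $ a $ c"] by (simp add: matrix_matrix_mult_def mat_def)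
  show "(\<Sum>b\<in>UNIV. matrix_inv A $ a $ b * A $ b $ c) = (if a = c then 1 else 0)"
    using arg_cong[OF AB(2), of "\<lambda>M. M $ a $ c"] by (simp add: matrix_matrix_mult_def mat_def)
qed




lemma diff_transform:
  assumes "f differentiable (at x)" "open S" "x \<in> S" "\<And>y. y \<in> S \<Longrightarrow> f y = h y"
  shows "h differentiable (at x)"
  using assms unfolding differentiable_def by (metis has_derivative_transform_within_open)

locale RAP =
  fixes U :: "(real^'i::finite) set" and g P :: "real^'i \<Rightarrow> 'i \<Rightarrow> 'i \<Rightarrow> real"
  assumes rap: "riem_almost_product U g P"
begin

lemma opn: "open U" using rap unfolding riem_almost_product_def by blast
lemma gsym: "x \<in> U \<Longrightarrow> g x i j = g x j i" using rap unfolding riem_almost_product_def by blast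
lemma P2: "x \<in> U \<Longrightarrow> (\<Sum>j\<in>UNIV. P x i j * P x j k) = (if i = k then 1 else 0)"
  using rap unfolding riem_almost_product_def by blast
lemma Pg: "x \<in> U \<Longrightarrow> (\<Sum>a\<in>UNIV. \<Sum>b\<in>UNIV. P x a i * P x b j * g x a b) = g x i j"
  using rap unfolding riem_almost_product_def by blast

lemma inv_at: "x \<in> U \<Longrightarrow> invertible (\<chi> a b. g x a b)"
  apply (rule posdef_invertible)
  using rap unfolding riem_almost_product_def by simp

lemma ginv1: "x \<in> U \<Longrightarrow> (\<Sum>b\<in>UNIV. g x a b * ginv g x b c) = (if a = c then 1 else 0)"
  using inv_mults(1)[OF inv_at, of x a c] by (simp add: ginv_def)
lemma ginv2: "x \<in> U \<Longrightarrow> (\<Sum>b\<in>UNIV. ginv g x a b * g x b c) = (if a = c then 1 else 0)"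
  using inv_mults(2)[OF inv_at, of x a c] by (simp add: ginv_def)

lemma sm_at: "smooth_fun_on U f \<Longrightarrow> x \<in> U \<Longrightarrow> iter_pd ks f differentiable (at x)"
  using opn unfolding smooth_fun_on_def differentiable_on_eq_differentiable_at[OF opn] by blast

lemma g_d: "x \<in> U \<Longrightarrow> (\<lambda>y. g y i j) differentiable (at x)"
  using sm_at[of "\<lambda>y. g y i j" x "[]"] rap unfolding riem_almost_product_def by simp
lemma P_d: "x \<in> U \<Longrightarrow> (\<lambda>y. P y i j) differentiable (at x)"
  using sm_at[of "\<lambda>y. P y i j" x "[]"] rap unfolding riem_almost_product_def by simp
lemma dg_d: "x \<in> U \<Longrightarrow> (\<lambda>y. pd k (\<lambda>z. g z i j) y) differentiable (at x)"
  using sm_at[of "\<lambda>y. g y i j" x "[k]"] rap unfolding riem_almost_product_def by simp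
lemma dP_d: "x \<in> U \<Longrightarrow> (\<lambda>y. pd k (\<lambda>z. P z i j) y) differentiable (at x)"
  using sm_at[of "\<lambda>y. P y i j" x "[k]"] rap unfolding riem_almost_product_def by simp

lemma ginv_d: "x \<in> U \<Longrightarrow> (\<lambda>y. ginv g y i j) differentiable (at x)"
proof -
  assume x: "x \<in> U"
  let ?h = "\<lambda>y. det (\<chi> a b. if b = i then (if a = j then 1 else 0) else g y a b) / det (\<chi> a b. g y a b)"
  have "?h differentiable (at x)"
    apply (rule differentiable_divide)
      apply (rule det_differentiable) subgoal for a b by (cases "b = i"; cases "a = j") (simp_all add: g_d x)
     apply (rule det_differentiable) apply (simp add: g_d x)
    using inv_at[OF x] invertible_det_nz by blast
  moreover have "\<And>y. y \<in> U \<Longrightarrow> ?h y = ginv g y i j"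
  proof -
    fix y assume y: "y \<in> U"
    have "ginv g y i j = det (\<chi> a b. if b = i then (if a = j then 1 else 0) else (\<chi> a b. g y a b)$a$b) / det (\<chi> a b. g y a b)"
      unfolding ginv_def by (rule inv_entry[OF inv_at[OF y]])
    then have "ginv g y i j = ?h y" by (simp only: vec_lambda_beta)
    then show "?h y = ginv g y i j" by (rule sym)
  qed
  ultimately show ?thesis by (rule diff_transform[OF _ opn x])
qed

end



lemma dsumU: "(\<And>a. f a differentiable F) \<Longrightarrow> (\<lambda>x. \<Sum>a\<in>(UNIV::'k::finite set). f a x) differentiable F"
  by (rule differentiable_sum) auto

lemmas dI = dsumU differentiable_mult differentiable_add differentiable_diff differentiable_const

definition KK :: "nat \<Rightarrow> (real^'i \<Rightarrow> 'i::finite \<Rightarrow> 'i \<Rightarrow> real) \<Rightarrow> (real^'i \<Rightarrow> 'i \<Rightarrow> 'i \<Rightarrow> real)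
    \<Rightarrow> real^'i \<Rightarrow> 'i \<Rightarrow> 'i \<Rightarrow> 'i \<Rightarrow> real" where
  "KK n g P y k i j = (1 / (2 * real n)) * (g y i j * POmega g P y k - leeP g P y j * (if k = i then 1 else 0))"

lemma connD_split: "connD n g P y k i j = christoffel g y k i j + KK n g P y k i j"
  unfolding connD_def KK_def by simp

context RAP begin

lemma chr_d: "x \<in> U \<Longrightarrow> (\<lambda>y. christoffel g y k i j) differentiable (at x)"
  unfolding christoffel_def by (intro dI ginv_d dg_d)
lemma covP_d: "x \<in> U \<Longrightarrow> (\<lambda>y. covP g P y i k j) differentiable (at x)"
  unfolding covP_def by (intro dI chr_d dP_d P_d)
lemma Ften_d: "x \<in> U \<Longrightarrow> (\<lambda>y. Ften g P y i j l) differentiable (at x)"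
  unfolding Ften_def by (intro dI covP_d g_d)
lemma lee_d: "x \<in> U \<Longrightarrow> (\<lambda>y. lee g P y l) differentiable (at x)"
  unfolding lee_def by (intro dI Ften_d ginv_d)
lemma leeP_d: "x \<in> U \<Longrightarrow> (\<lambda>y. leeP g P y l) differentiable (at x)"
  unfolding leeP_def by (intro dI lee_d P_d)
lemma Omega_d: "x \<in> U \<Longrightarrow> (\<lambda>y. Omega g P y l) differentiable (at x)"
  unfolding Omega_def by (intro dI lee_d ginv_d)
lemma POmega_d: "x \<in> U \<Longrightarrow> (\<lambda>y. POmega g P y l) differentiable (at x)"
  unfolding POmega_def by (intro dI Omega_d P_d)
lemma KK_d: "x \<in> U \<Longrightarrow> (\<lambda>y. KK n g P y k i j) differentiable (at x)"
  unfolding KK_def by (intro dI POmega_d leeP_d g_d)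

end



context RAP begin

lemma gP_swap:
  assumes y: "y \<in> U"
  shows "(\<Sum>m\<in>UNIV. g y m w * P y m a) = (\<Sum>b\<in>UNIV. g y a b * P y b w)"
proof -
  have "(\<Sum>m\<in>UNIV. g y m w * P y m a) = (\<Sum>m\<in>UNIV. (\<Sum>c\<in>UNIV. \<Sum>b\<in>UNIV. P y c m * P y b w * g y c b) * P y m a)"
    using Pg[OF y] by simp
  also have "\<dots> = (\<Sum>m\<in>UNIV. \<Sum>c\<in>UNIV. \<Sum>b\<in>UNIV. P y c m * P y m a * (P y b w * g y c b))"
    by (simp add: sum_distrib_left sum_distrib_right mult_ac)
  also have "\<dots> = (\<Sum>c\<in>UNIV. \<Sum>m\<in>UNIV. \<Sum>b\<in>UNIV. P y c m * P y m a * (P y b w * g y c b))"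
    by (rule sum.swap)
  also have "\<dots> = (\<Sum>c\<in>UNIV. \<Sum>b\<in>UNIV. \<Sum>m\<in>UNIV. P y c m * P y m a * (P y b w * g y c b))"
    by (intro sum.cong refl sum.swap)
  also have "\<dots> = (\<Sum>c\<in>UNIV. \<Sum>b\<in>UNIV. (\<Sum>m\<in>UNIV. P y c m * P y m a) * (P y b w * g y c b))"
    by (simp add: sum_distrib_right)
  also have "\<dots> = (\<Sum>b\<in>UNIV. g y a b * P y b w)"
    by (simp add: P2[OF y] sum_if_const mult.commute)
  finally show ?thesis by (simp add: mult_ac)
qed

lemma gOmega:
  assumes y: "y \<in> U"
  shows "(\<Sum>a\<in>UNIV. g y b a * Omega g P y a) = lee g P y b"
proof -
  have "(\<Sum>a\<in>UNIV. g y b a * Omega g P y a) = (\<Sum>a\<in>UNIV. \<Sum>l\<in>UNIV. g y b a * ginv g y a l * lee g P y l)"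
    by (simp add: Omega_def sum_distrib_left mult_ac)
  also have "\<dots> = (\<Sum>l\<in>UNIV. \<Sum>a\<in>UNIV. g y b a * ginv g y a l * lee g P y l)"
    by (rule sum.swap)
  also have "\<dots> = (\<Sum>l\<in>UNIV. (\<Sum>a\<in>UNIV. g y b a * ginv g y a l) * lee g P y l)"
    by (simp add: sum_distrib_right)
  also have "\<dots> = lee g P y b" by (simp add: ginv1[OF y])
  finally show ?thesis .
qed

lemma bV:
  assumes y: "y \<in> U"
  shows "leeP g P y w = (\<Sum>m\<in>UNIV. g y m w * POmega g P y m)"
proof -
  have "(\<Sum>m\<in>UNIV. g y m w * POmega g P y m) = (\<Sum>m\<in>UNIV. \<Sum>a\<in>UNIV. g y m w * P y m a * Omega g P y a)"
    by (simp add: POmega_def sum_distrib_left mult_ac)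
  also have "\<dots> = (\<Sum>a\<in>UNIV. \<Sum>m\<in>UNIV. g y m w * P y m a * Omega g P y a)"
    by (rule sum.swap)
  also have "\<dots> = (\<Sum>a\<in>UNIV. (\<Sum>m\<in>UNIV. g y m w * P y m a) * Omega g P y a)"
    by (simp add: sum_distrib_right)
  also have "\<dots> = (\<Sum>a\<in>UNIV. (\<Sum>b\<in>UNIV. g y b a * P y b w) * Omega g P y a)"
    by (simp add: gP_swap[OF y] gsym[OF y])
  also have "\<dots> = (\<Sum>a\<in>UNIV. \<Sum>b\<in>UNIV. P y b w * (g y b a * Omega g P y a))"
    by (simp add: sum_distrib_right sum_distrib_left mult_ac)
  also have "\<dots> = (\<Sum>b\<in>UNIV. \<Sum>a\<in>UNIV. P y b w * (g y b a * Omega g P y a))"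
    by (rule sum.swap)
  also have "\<dots> = (\<Sum>b\<in>UNIV. P y b w * lee g P y b)"
    by (simp add: sum_distrib_left[symmetric] gOmega[OF y])
  also have "\<dots> = leeP g P y w" by (simp add: leeP_def mult_ac)
  finally show ?thesis by simp
qed

lemma dg_sym: "x \<in> U \<Longrightarrow> pd l (\<lambda>y. g y i j) x = pd l (\<lambda>y. g y j i) x"
  by (rule pd_cong[OF g_d opn]) (auto simp: gsym)

lemma chr_sym: "x \<in> U \<Longrightarrow> christoffel g x k i j = christoffel g x k j i"
  unfolding christoffel_def by (simp add: dg_sym[of x _ i j] add.commute)

lemma lowGamma:
  assumes x: "x \<in> U"
  shows "(\<Sum>l\<in>UNIV. christoffel g x l i j * g x l k) = (1/2) * (pd i (\<lambda>y. g y j k) x + pd j (\<lambda>y. g y i k) x - pd k (\<lambda>y. g y i j) x)"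
proof -
  define X where "X m = pd i (\<lambda>y. g y j m) x + pd j (\<lambda>y. g y i m) x - pd m (\<lambda>y. g y i j) x" for m
  have "(\<Sum>l\<in>UNIV. christoffel g x l i j * g x l k) = (\<Sum>l\<in>UNIV. \<Sum>m\<in>UNIV. (1/2) * (g x k l * ginv g x l m * X m))"
    unfolding christoffel_def X_def by (simp add: sum_distrib_left sum_distrib_right gsym[OF x, of _ k] mult_ac)
  also have "\<dots> = (\<Sum>m\<in>UNIV. \<Sum>l\<in>UNIV. (1/2) * (g x k l * ginv g x l m * X m))"
    by (rule sum.swap)
  also have "\<dots> = (\<Sum>m\<in>UNIV. (1/2) * ((\<Sum>l\<in>UNIV. g x k l * ginv g x l m) * X m))"
    by (simp add: sum_distrib_left sum_distrib_right)
  also have "\<dots> = (1/2) * X k" by (simp add: ginv1[OF x])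
  finally show ?thesis by (simp add: X_def)
qed

lemma compat:
  assumes x: "x \<in> U"
  shows "pd i (\<lambda>y. g y j k) x = (\<Sum>l\<in>UNIV. christoffel g x l i j * g x l k + christoffel g x l i k * g x j l)"
  using lowGamma[OF x, of i j k] lowGamma[OF x, of i k j] dg_sym[OF x, of i j k]
  by (simp add: sum.distrib gsym[OF x, of j] algebra_simps)

end



context RAP begin

lemma dKK:
  assumes x: "x \<in> U"
  shows "pd i (\<lambda>y. KK n g P y m j k) x = (1 / (2 * real n)) *
     (pd i (\<lambda>y. g y j k) x * POmega g P x m + g x j k * pd i (\<lambda>y. POmega g P y m) x
      - pd i (\<lambda>y. leeP g P y k) x * (if m = j then 1 else 0))"
  unfolding KK_def
  apply (subst pd_cmult)
   apply (intro dI g_d POmega_d leeP_d x)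
  apply (subst pd_diff)
    apply (intro dI g_d POmega_d leeP_d x)
   apply (intro dI g_d POmega_d leeP_d x)
  apply (subst pd_mult)
    apply (intro dI g_d POmega_d leeP_d x)
   apply (intro dI g_d POmega_d leeP_d x)
  apply (subst pd_multc)
   apply (intro dI g_d POmega_d leeP_d x)
  apply simp
  done

lemma dbeta:
  assumes x: "x \<in> U"
  shows "pd i (\<lambda>y. leeP g P y w) x = (\<Sum>m\<in>UNIV. pd i (\<lambda>y. g y m w) x * POmega g P x m + g x m w * pd i (\<lambda>y. POmega g P y m) x)"
proof -
  have "pd i (\<lambda>y. leeP g P y w) x = pd i (\<lambda>y. \<Sum>m\<in>UNIV. g y m w * POmega g P y m) x"
    by (rule pd_cong[OF leeP_d[OF x] opn x]) (simp add: bV)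
  also have "\<dots> = (\<Sum>m\<in>UNIV. pd i (\<lambda>y. g y m w * POmega g P y m) x)"
    by (rule pd_sum) (auto intro!: dI g_d POmega_d x)
  also have "\<dots> = (\<Sum>m\<in>UNIV. pd i (\<lambda>y. g y m w) x * POmega g P x m + g x m w * pd i (\<lambda>y. POmega g P y m) x)"
    by (intro sum.cong refl pd_mult g_d POmega_d x)
  finally show ?thesis .
qed

lemma curv_split:
  assumes x: "x \<in> U"
  shows "curv (connD n g P) x m i j k = curv (christoffel g) x m i j k
     + pd i (\<lambda>y. KK n g P y m j k) x - pd j (\<lambda>y. KK n g P y m i k) x
     + (\<Sum>l\<in>UNIV. christoffel g x l j k * KK n g P x m i l + KK n g P x l j k * christoffel g x m i l
          + KK n g P x l j k * KK n g P x m i l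
          - christoffel g x l i k * KK n g P x m j l - KK n g P x l i k * christoffel g x m j l
          - KK n g P x l i k * KK n g P x m j l)"
proof -
  have e1: "pd i (\<lambda>y. connD n g P y m j k) x = pd i (\<lambda>y. christoffel g y m j k) x + pd i (\<lambda>y. KK n g P y m j k) x"
    unfolding connD_split by (rule pd_add[OF chr_d[OF x] KK_d[OF x]])
  have e2: "pd j (\<lambda>y. connD n g P y m i k) x = pd j (\<lambda>y. christoffel g y m i k) x + pd j (\<lambda>y. KK n g P y m i k) x"
    unfolding connD_split by (rule pd_add[OF chr_d[OF x] KK_d[OF x]])
  show ?thesis
    unfolding curv_def e1 e2 by (simp add: connD_split sum.distrib sum_subtractf algebra_simps)
qed

end



locale ALG =
  fixes gg :: "'i::finite \<Rightarrow> 'i \<Rightarrow> real" and Gm :: "'i \<Rightarrow> 'i \<Rightarrow> 'i \<Rightarrow> real"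
    and V \<beta> :: "'i \<Rightarrow> real" and dg :: "'i \<Rightarrow> 'i \<Rightarrow> 'i \<Rightarrow> real"
    and dV d\<beta> :: "'i \<Rightarrow> 'i \<Rightarrow> real" and a :: real
    and K :: "'i \<Rightarrow> 'i \<Rightarrow> 'i \<Rightarrow> real" and dK :: "'i \<Rightarrow> 'i \<Rightarrow> 'i \<Rightarrow> 'i \<Rightarrow> real"
  assumes sym: "\<And>a b. gg a b = gg b a"
    and Gsym: "\<And>l i j. Gm l i j = Gm l j i"
    and compat: "\<And>i j k. dg i j k = (\<Sum>l\<in>UNIV. Gm l i j * gg l k + Gm l i k * gg j l)"
    and bV: "\<And>k. \<beta> k = (\<Sum>m\<in>UNIV. gg m k * V m)"
    and dbV: "\<And>i k. d\<beta> i k = (\<Sum>m\<in>UNIV. dg i m k * V m + gg m k * dV i m)"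
    and K_def: "\<And>m i j. K m i j = a * (gg i j * V m - \<beta> j * (if m = i then 1 else 0))"
    and dK_def: "\<And>i m j k. dK i m j k = a * (dg i j k * V m + gg j k * dV i m - d\<beta> i k * (if m = j then 1 else 0))"
begin

definition "Gl i l w = (\<Sum>m\<in>UNIV. Gm m i l * gg m w)"
definition "T i w = (\<Sum>m\<in>UNIV. Gl i m w * V m)"
definition "Q i w = (\<Sum>l\<in>UNIV. Gm l i w * \<beta> l)"
definition "nb = (\<Sum>l\<in>UNIV. \<beta> l * V l)"

lemma Gl_sym: "Gl i j k = Gl j i k" unfolding Gl_def by (simp add: Gsym)

lemma compat': "dg i j k = Gl i j k + Gl i k j"
  unfolding compat Gl_def by (simp add: sum.distrib sym mult_ac)

lemma bV': "(\<Sum>m\<in>UNIV. gg m k * V m) = \<beta> k" using bV by simp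
lemma bV'': "(\<Sum>m\<in>UNIV. V m * gg k m) = \<beta> k" using bV by (simp add: sym mult_ac)

lemma L1a: "(\<Sum>m\<in>UNIV. gg m w * dV i m) = d\<beta> i w - (\<Sum>m\<in>UNIV. dg i m w * V m)"
  using dbV[of i w] by (simp add: sum.distrib)

lemma L1b: "(\<Sum>m\<in>UNIV. dg i m w * V m) = T i w + Q i w"
proof -
  have "(\<Sum>m\<in>UNIV. dg i m w * V m) = (\<Sum>m\<in>UNIV. Gl i m w * V m) + (\<Sum>m\<in>UNIV. \<Sum>l\<in>UNIV. Gm l i w * (gg m l * V m))"
    by (simp add: compat' Gl_def sum.distrib sum_distrib_right sum_distrib_left algebra_simps sym)
  also have "(\<Sum>m\<in>UNIV. \<Sum>l\<in>UNIV. Gm l i w * (gg m l * V m)) = (\<Sum>l\<in>UNIV. \<Sum>m\<in>UNIV. Gm l i w * (gg m l * V m))"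
    by (rule sum.swap)
  also have "\<dots> = Q i w" unfolding Q_def by (simp add: sum_distrib_left[symmetric] bV')
  finally show ?thesis unfolding T_def .
qed

lemma L1: "(\<Sum>m\<in>UNIV. gg m w * dK i m j k) = a * (dg i j k * \<beta> w + gg j k * (d\<beta> i w - T i w - Q i w) - d\<beta> i k * gg j w)"
proof -
  have "(\<Sum>m\<in>UNIV. gg m w * dK i m j k) = a * (dg i j k * (\<Sum>m\<in>UNIV. gg m w * V m) + gg j k * (\<Sum>m\<in>UNIV. gg m w * dV i m) - d\<beta> i k * gg j w)"
    by (simp add: dK_def sum.distrib sum_subtractf sum_distrib_left algebra_simps)
  then show ?thesis by (simp add: bV' L1a L1b)
qed

lemma L2: "(\<Sum>m\<in>UNIV. gg m w * (\<Sum>l\<in>UNIV. Gm l j k * K m i l)) = a * (Gl j k i * \<beta> w - gg i w * Q j k)"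
proof -
  have "(\<Sum>m\<in>UNIV. gg m w * (\<Sum>l\<in>UNIV. Gm l j k * K m i l)) = (\<Sum>l\<in>UNIV. \<Sum>m\<in>UNIV. gg m w * (Gm l j k * K m i l))"
    by (simp add: sum_distrib_left) (rule sum.swap)
  also have "\<dots> = (\<Sum>l\<in>UNIV. (Gm l j k * a * gg i l) * (\<Sum>m\<in>UNIV. gg m w * V m) - Gm l j k * a * \<beta> l * gg i w)"
  proof (rule sum.cong[OF refl])
    fix l
    have "(\<Sum>m\<in>UNIV. gg m w * (Gm l j k * K m i l)) = (\<Sum>m\<in>UNIV. (Gm l j k * a * gg i l) * (gg m w * V m) - (Gm l j k * a * \<beta> l) * (gg m w * (if m = i then 1 else 0)))"
      by (rule sum.cong[OF refl]) (simp add: K_def algebra_simps)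
    also have "\<dots> = (Gm l j k * a * gg i l) * (\<Sum>m\<in>UNIV. gg m w * V m) - (Gm l j k * a * \<beta> l) * gg i w"
      by (simp add: sum_subtractf sum_distrib_left[symmetric])
    finally show "(\<Sum>m\<in>UNIV. gg m w * (Gm l j k * K m i l)) = (Gm l j k * a * gg i l) * (\<Sum>m\<in>UNIV. gg m w * V m) - Gm l j k * a * \<beta> l * gg i w" .
  qed
  also have "\<dots> = a * \<beta> w * (\<Sum>l\<in>UNIV. Gm l j k * gg l i) - a * gg i w * (\<Sum>l\<in>UNIV. Gm l j k * \<beta> l)"
    unfolding bV' by (simp add: sum_subtractf sum_distrib_left sym[of i] algebra_simps)
  also have "\<dots> = a * (Gl j k i * \<beta> w - gg i w * Q j k)"
    by (simp add: Gl_def Q_def algebra_simps)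
  finally show ?thesis .
qed

lemma Kl: "(\<Sum>m\<in>UNIV. gg m w * K m i l) = a * (gg i l * \<beta> w - \<beta> l * gg i w)"
proof -
  have "(\<Sum>m\<in>UNIV. gg m w * K m i l) = (\<Sum>m\<in>UNIV. (a * gg i l) * (gg m w * V m) - (a * \<beta> l) * (gg m w * (if m = i then 1 else 0)))"
    by (rule sum.cong[OF refl]) (simp add: K_def algebra_simps)
  also have "\<dots> = (a * gg i l) * (\<Sum>m\<in>UNIV. gg m w * V m) - (a * \<beta> l) * gg i w"
    by (simp add: sum_subtractf sum_distrib_left[symmetric])
  finally show ?thesis unfolding bV' by (simp add: algebra_simps)
qed

lemma Glow: "(\<Sum>m\<in>UNIV. gg m w * Gm m i l) = Gl i l w"
  unfolding Gl_def by (simp add: mult_ac)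

lemma L3: "(\<Sum>m\<in>UNIV. gg m w * (\<Sum>l\<in>UNIV. K l j k * Gm m i l)) = a * (gg j k * T i w - \<beta> k * Gl i j w)"
proof -
  have "(\<Sum>m\<in>UNIV. gg m w * (\<Sum>l\<in>UNIV. K l j k * Gm m i l)) = (\<Sum>l\<in>UNIV. \<Sum>m\<in>UNIV. K l j k * (gg m w * Gm m i l))"
    by (simp add: sum_distrib_left mult_ac) (rule sum.swap)
  also have "\<dots> = (\<Sum>l\<in>UNIV. K l j k * Gl i l w)"
    by (simp add: sum_distrib_left[symmetric] Glow)
  also have "\<dots> = (\<Sum>l\<in>UNIV. (a * gg j k) * (Gl i l w * V l) - (a * \<beta> k) * (Gl i l w * (if l = j then 1 else 0)))"
    by (rule sum.cong[OF refl]) (simp add: K_def algebra_simps)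
  also have "\<dots> = (a * gg j k) * (\<Sum>l\<in>UNIV. Gl i l w * V l) - (a * \<beta> k) * Gl i j w"
    by (simp add: sum_subtractf sum_distrib_left[symmetric])
  also have "\<dots> = a * (gg j k * T i w - \<beta> k * Gl i j w)"
    by (simp add: T_def algebra_simps)
  finally show ?thesis .
qed

lemma L4: "(\<Sum>m\<in>UNIV. gg m w * (\<Sum>l\<in>UNIV. K l j k * K m i l)) =
   a * a * (gg j k * \<beta> i * \<beta> w - gg j k * nb * gg i w - \<beta> k * gg i j * \<beta> w + \<beta> k * \<beta> j * gg i w)"
proof -
  have "(\<Sum>m\<in>UNIV. gg m w * (\<Sum>l\<in>UNIV. K l j k * K m i l)) = (\<Sum>l\<in>UNIV. \<Sum>m\<in>UNIV. gg m w * (K l j k * K m i l))"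
    by (simp only: sum_distrib_left) (rule sum.swap)
  also have "\<dots> = (\<Sum>l\<in>UNIV. K l j k * (\<Sum>m\<in>UNIV. gg m w * K m i l))"
    by (simp only: sum_distrib_left) (simp add: mult_ac)
  also have "\<dots> = (\<Sum>l\<in>UNIV. K l j k * (a * (gg i l * \<beta> w - \<beta> l * gg i w)))"
    by (simp only: Kl)
  also have "\<dots> = (\<Sum>l\<in>UNIV. (a * a * gg j k * \<beta> w) * (V l * gg i l) - (a * a * gg j k * gg i w) * (\<beta> l * V l)
         - (a * a * \<beta> k) * ((gg i l * \<beta> w - \<beta> l * gg i w) * (if l = j then 1 else 0)))"
    by (rule sum.cong[OF refl]) (simp add: K_def algebra_simps)
  also have "\<dots> = (a * a * gg j k * \<beta> w) * (\<Sum>l\<in>UNIV. V l * gg i l) - (a * a * gg j k * gg i w) * nb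
         - (a * a * \<beta> k) * (gg i j * \<beta> w - \<beta> j * gg i w)"
    by (simp add: sum_subtractf sum_distrib_left[symmetric] nb_def del: mult_delta mult_if0) (simp add: if_distrib cong: if_cong)
  also have "\<dots> = a * a * (gg j k * \<beta> i * \<beta> w - gg j k * nb * gg i w - \<beta> k * gg i j * \<beta> w + \<beta> k * \<beta> j * gg i w)"
    by (simp add: bV'' algebra_simps)
  finally show ?thesis .
qed

definition "SS i w = -(a * (d\<beta> i w - Q i w) + a * a * \<beta> i * \<beta> w)"

lemma decomp:
  fixes Rc :: "'i \<Rightarrow> real"
  assumes flat: "\<And>m. 0 = Rc m + dK i m j k - dK j m i k + (\<Sum>l\<in>UNIV. Gm l j k * K m i l + K l j k * Gm m i l + K l j k * K m i l
          - Gm l i k * K m j l - K l i k * Gm m j l - K l i k * K m j l)"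
  shows "(\<Sum>m\<in>UNIV. gg m w * Rc m) = gg j k * SS i w - gg i k * SS j w + SS j k * gg i w - SS i k * gg j w
     + a * a * nb * (gg j k * gg i w - gg i k * gg j w)"
proof -
  have st1: "Rc m = -(dK i m j k - dK j m i k + (\<Sum>l\<in>UNIV. Gm l j k * K m i l) + (\<Sum>l\<in>UNIV. K l j k * Gm m i l)
      + (\<Sum>l\<in>UNIV. K l j k * K m i l) - (\<Sum>l\<in>UNIV. Gm l i k * K m j l) - (\<Sum>l\<in>UNIV. K l i k * Gm m j l)
      - (\<Sum>l\<in>UNIV. K l i k * K m j l))" for m
  proof -
    have "(\<Sum>l\<in>UNIV. Gm l j k * K m i l + K l j k * Gm m i l + K l j k * K m i l
          - Gm l i k * K m j l - K l i k * Gm m j l - K l i k * K m j l) =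
      (\<Sum>l\<in>UNIV. Gm l j k * K m i l) + (\<Sum>l\<in>UNIV. K l j k * Gm m i l)
      + (\<Sum>l\<in>UNIV. K l j k * K m i l) - (\<Sum>l\<in>UNIV. Gm l i k * K m j l) - (\<Sum>l\<in>UNIV. K l i k * Gm m j l)
      - (\<Sum>l\<in>UNIV. K l i k * K m j l)"
      by (simp only: sum.distrib sum_subtractf)
    then show ?thesis using flat[of m] by linarith
  qed
  have "(\<Sum>m\<in>UNIV. gg m w * Rc m) = -((\<Sum>m\<in>UNIV. gg m w * dK i m j k) - (\<Sum>m\<in>UNIV. gg m w * dK j m i k)
      + (\<Sum>m\<in>UNIV. gg m w * (\<Sum>l\<in>UNIV. Gm l j k * K m i l)) + (\<Sum>m\<in>UNIV. gg m w * (\<Sum>l\<in>UNIV. K l j k * Gm m i l))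
      + (\<Sum>m\<in>UNIV. gg m w * (\<Sum>l\<in>UNIV. K l j k * K m i l)) - (\<Sum>m\<in>UNIV. gg m w * (\<Sum>l\<in>UNIV. Gm l i k * K m j l))
      - (\<Sum>m\<in>UNIV. gg m w * (\<Sum>l\<in>UNIV. K l i k * Gm m j l))
      - (\<Sum>m\<in>UNIV. gg m w * (\<Sum>l\<in>UNIV. K l i k * K m j l)))"
    by (simp only: st1 sum.distrib sum_subtractf distrib_left right_diff_distrib mult_minus_right sum_negf)
  also have "\<dots> = gg j k * SS i w - gg i k * SS j w + SS j k * gg i w - SS i k * gg j w
     + a * a * nb * (gg j k * gg i w - gg i k * gg j w)"
    unfolding L1 L2 L3 L4 SS_def compat'
    by (simp add: Gl_sym[of j i] sym[of j i] algebra_simps)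
  finally show ?thesis .
qed

end



locale WEYL =
  fixes gg gi :: "'i::finite \<Rightarrow> 'i \<Rightarrow> real"
  assumes sym: "\<And>a b. gg a b = gg b a"
    and inv1: "\<And>a c. (\<Sum>b\<in>UNIV. gg a b * gi b c) = (if a = c then 1 else 0)"
    and inv2: "\<And>a c. (\<Sum>b\<in>UNIV. gi a b * gg b c) = (if a = c then 1 else 0)"
begin

definition "tr S = (\<Sum>i\<in>UNIV. \<Sum>l\<in>UNIV. gi i l * S i l)"

lemma P1: "(\<Sum>i\<in>UNIV. \<Sum>l\<in>UNIV. gi i l * (X * S i l)) = X * tr S"
  unfolding tr_def by (simp add: sum_distrib_left mult_ac)

lemma P2: "(\<Sum>i\<in>UNIV. \<Sum>l\<in>UNIV. gi i l * (gg i k * S j l)) = S j k"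
proof -
  have "(\<Sum>i\<in>UNIV. \<Sum>l\<in>UNIV. gi i l * (gg i k * S j l)) = (\<Sum>l\<in>UNIV. \<Sum>i\<in>UNIV. gi i l * (gg i k * S j l))"
    by (rule sum.swap)
  also have "\<dots> = (\<Sum>l\<in>UNIV. (\<Sum>i\<in>UNIV. gg k i * gi i l) * S j l)"
    by (simp add: sum_distrib_right sum_distrib_left sym[of _ k] mult_ac)
  also have "\<dots> = S j k" by (simp add: inv1)
  finally show ?thesis .
qed

lemma P3: "(\<Sum>i\<in>UNIV. \<Sum>l\<in>UNIV. gi i l * (X * gg i l)) = X * real CARD('i)"
proof -
  have "(\<Sum>i\<in>UNIV. \<Sum>l\<in>UNIV. gi i l * (X * gg i l)) = (\<Sum>i\<in>UNIV. X * (\<Sum>l\<in>UNIV. gi i l * gg l i))"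
  proof (rule sum.cong[OF refl])
    fix i show "(\<Sum>l\<in>UNIV. gi i l * (X * gg i l)) = X * (\<Sum>l\<in>UNIV. gi i l * gg l i)"
      by (simp add: sum_distrib_left sym[of i] mult_ac)
  qed
  also have "\<dots> = X * real CARD('i)" by (simp add: inv2)
  finally show ?thesis .
qed

lemma P4: "(\<Sum>i\<in>UNIV. \<Sum>l\<in>UNIV. gi i l * (S i k * gg j l)) = S j k"
proof -
  have "(\<Sum>i\<in>UNIV. \<Sum>l\<in>UNIV. gi i l * (S i k * gg j l)) = (\<Sum>i\<in>UNIV. S i k * (\<Sum>l\<in>UNIV. gi i l * gg l j))"
    by (simp add: sum_distrib_left sym[of j] mult_ac)
  also have "\<dots> = S j k" by (simp add: inv2)
  finally show ?thesis .
qed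

lemma P5: "(\<Sum>i\<in>UNIV. \<Sum>l\<in>UNIV. gi i l * (X * gg i k * gg j l)) = X * gg j k"
proof -
  have "(\<Sum>i\<in>UNIV. \<Sum>l\<in>UNIV. gi i l * (X * gg i k * gg j l)) = (\<Sum>i\<in>UNIV. X * gg i k * (\<Sum>l\<in>UNIV. gi i l * gg l j))"
    by (simp add: sum_distrib_left sym[of j] mult_ac)
  also have "\<dots> = X * gg j k" by (simp add: inv2)
  finally show ?thesis .
qed

lemma tr_gg: "tr gg = real CARD('i)"
  unfolding tr_def using P3[of 1] by simp

definition "RR S c i j k w = gg j k * S i w - gg i k * S j w + S j k * gg i w - S i k * gg j w
   + c * (gg j k * gg i w - gg i k * gg j w)"

definition "ric S c j k = (\<Sum>i\<in>UNIV. \<Sum>l\<in>UNIV. gi i l * RR S c i j k l)"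

lemma ric_eq: "ric S c j k = (real CARD('i) - 2) * S j k + (tr S + c * (real CARD('i) - 1)) * gg j k"
proof -
  have "ric S c j k = (\<Sum>i\<in>UNIV. \<Sum>l\<in>UNIV. gi i l * (gg j k * S i l)) - (\<Sum>i\<in>UNIV. \<Sum>l\<in>UNIV. gi i l * (gg i k * S j l))
    + (\<Sum>i\<in>UNIV. \<Sum>l\<in>UNIV. gi i l * (S j k * gg i l)) - (\<Sum>i\<in>UNIV. \<Sum>l\<in>UNIV. gi i l * (S i k * gg j l))
    + (\<Sum>i\<in>UNIV. \<Sum>l\<in>UNIV. gi i l * ((c * gg j k) * gg i l)) - (\<Sum>i\<in>UNIV. \<Sum>l\<in>UNIV. gi i l * (c * gg i k * gg j l))"
    unfolding ric_def RR_def
    by (simp only: sum.distrib sum_subtractf distrib_left right_diff_distrib) (simp add: mult_ac)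
  also have "\<dots> = (real CARD('i) - 2) * S j k + (tr S + c * (real CARD('i) - 1)) * gg j k"
    unfolding P1 P2 P3 P4 P5 by (simp add: algebra_simps tr_gg)
  finally show ?thesis .
qed

lemma scal_eq: "(\<Sum>j\<in>UNIV. \<Sum>k\<in>UNIV. gi j k * ric S c j k) =
   (real CARD('i) - 2) * tr S + (tr S + c * (real CARD('i) - 1)) * real CARD('i)"
proof -
  have "(\<Sum>j\<in>UNIV. \<Sum>k\<in>UNIV. gi j k * ric S c j k) = (\<Sum>j\<in>UNIV. \<Sum>k\<in>UNIV. gi j k * ((real CARD('i) - 2) * S j k))
     + (\<Sum>j\<in>UNIV. \<Sum>k\<in>UNIV. gi j k * ((tr S + c * (real CARD('i) - 1)) * gg j k))"
    unfolding ric_eq by (simp only: sum.distrib distrib_left)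
  also have "\<dots> = (real CARD('i) - 2) * tr S + (tr S + c * (real CARD('i) - 1)) * real CARD('i)"
    unfolding P1 P3 by (simp add: tr_gg)
  finally show ?thesis .
qed

lemma frac_aux:
  fixes X Y Z W d1 d2 :: real
  assumes "d1 \<noteq> 0" "d2 \<noteq> 0" "d1 * d2 * X = d2 * Y - Z * W"
  shows "X - (1 / d1) * (Y - (Z / d2) * W) = 0"
proof -
  have "X = (d2 * Y - Z * W) / (d1 * d2)" using assms by (simp add: field_simps)
  then show ?thesis using assms by (simp add: field_simps)
qed

lemma weyl_zero:
  assumes N: "real CARD('i) = 2 * real n" and n2: "n \<ge> 2"
  shows "RR S c i j k l - (1 / (2 * (real n - 1))) *
     ((gg j k * ric S c i l - gg i k * ric S c j l + ric S c j k * gg i l - ric S c i k * gg j l)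
      - ((\<Sum>j\<in>UNIV. \<Sum>k\<in>UNIV. gi j k * ric S c j k) / (2 * real n - 1)) * (gg j k * gg i l - gg i k * gg j l)) = 0"
proof (rule frac_aux)
  show "2 * (real n - 1) \<noteq> 0" "2 * real n - 1 \<noteq> 0" using n2 by auto
  show "2 * (real n - 1) * (2 * real n - 1) * RR S c i j k l =
    (2 * real n - 1) * (gg j k * ric S c i l - gg i k * ric S c j l + ric S c j k * gg i l - ric S c i k * gg j l) -
    (\<Sum>j\<in>UNIV. \<Sum>k\<in>UNIV. gi j k * ric S c j k) * (gg j k * gg i l - gg i k * gg j l)"
    unfolding scal_eq unfolding ric_eq RR_def N by (simp add: algebra_simps)
qed

end



context RAP begin

lemma Riem_form:
  assumes x: "x \<in> U"
    and flat: "\<forall>m i j k. curv (connD n g P) x m i j k = 0"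
  shows "\<exists>S c. \<forall>i j k w. Riem g x i j k w = g x j k * S i w - g x i k * S j w + S j k * g x i w - S i k * g x j w
   + c * (g x j k * g x i w - g x i k * g x j w)"
proof -
  interpret A: ALG "g x" "christoffel g x" "POmega g P x" "leeP g P x" "\<lambda>i j k. pd i (\<lambda>y. g y j k) x"
    "\<lambda>i m. pd i (\<lambda>y. POmega g P y m) x" "\<lambda>i k. pd i (\<lambda>y. leeP g P y k) x" "1 / (2 * real n)"
    "KK n g P x" "\<lambda>i m j k. pd i (\<lambda>y. KK n g P y m j k) x"
  proof
    show "\<And>a b. g x a b = g x b a" by (rule gsym[OF x])
    show "\<And>l i j. christoffel g x l i j = christoffel g x l j i" by (rule chr_sym[OF x])
    show "\<And>i j k. pd i (\<lambda>y. g y j k) x = (\<Sum>l\<in>UNIV. christoffel g x l i j * g x l k + christoffel g x l i k * g x j l)"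
      by (rule compat[OF x])
    show "\<And>k. leeP g P x k = (\<Sum>m\<in>UNIV. g x m k * POmega g P x m)" by (rule bV[OF x])
    show "\<And>i k. pd i (\<lambda>y. leeP g P y k) x = (\<Sum>m\<in>UNIV. pd i (\<lambda>y. g y m k) x * POmega g P x m + g x m k * pd i (\<lambda>y. POmega g P y m) x)"
      by (rule dbeta[OF x])
    show "\<And>m i j. KK n g P x m i j = 1 / (2 * real n) * (g x i j * POmega g P x m - leeP g P x j * (if m = i then 1 else 0))"
      by (simp add: KK_def)
    show "\<And>i m j k. pd i (\<lambda>y. KK n g P y m j k) x = 1 / (2 * real n) * (pd i (\<lambda>y. g y j k) x * POmega g P x m + g x j k * pd i (\<lambda>y. POmega g P y m) x - pd i (\<lambda>y. leeP g P y k) x * (if m = j then 1 else 0))"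
      by (rule dKK[OF x])
  qed
  have "Riem g x i j k w = g x j k * A.SS i w - g x i k * A.SS j w + A.SS j k * g x i w - A.SS i k * g x j w
     + 1 / (2 * real n) * (1 / (2 * real n)) * A.nb * (g x j k * g x i w - g x i k * g x j w)" for i j k w
  proof -
    have "Riem g x i j k w = (\<Sum>m\<in>UNIV. g x m w * curv (christoffel g) x m i j k)" by (simp add: Riem_def)
    also have "\<dots> = g x j k * A.SS i w - g x i k * A.SS j w + A.SS j k * g x i w - A.SS i k * g x j w
     + 1 / (2 * real n) * (1 / (2 * real n)) * A.nb * (g x j k * g x i w - g x i k * g x j w)"
    proof (rule A.decomp)
      fix m
      show "0 = curv (christoffel g) x m i j k + pd i (\<lambda>y. KK n g P y m j k) x - pd j (\<lambda>y. KK n g P y m i k) x +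
          (\<Sum>l\<in>UNIV. christoffel g x l j k * KK n g P x m i l + KK n g P x l j k * christoffel g x m i l + KK n g P x l j k * KK n g P x m i l -
            christoffel g x l i k * KK n g P x m j l - KK n g P x l i k * christoffel g x m j l - KK n g P x l i k * KK n g P x m j l)"
        using curv_split[OF x, of n m i j k] flat by simp
    qed
    finally show ?thesis .
  qed
  then show ?thesis by blast
qed

lemma main:
  assumes dim: "CARD('i) = 2 * n" and n2: "n \<ge> 2"
    and flat: "\<forall>x\<in>U. \<forall>m i j k. curv (connD n g P) x m i j k = 0"
  shows "\<forall>x\<in>U. \<forall>i j k l. weyl n g x i j k l = 0"
proof (intro ballI allI)
  fix x i j k l assume x: "x \<in> U"
  obtain S c where R0: "\<forall>i j k w. Riem g x i j k w = g x j k * S i w - g x i k * S j w + S j k * g x i w - S i k * g x j w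
   + c * (g x j k * g x i w - g x i k * g x j w)"
    using Riem_form[OF x] flat x by blast
  interpret W: WEYL "g x" "ginv g x"
  proof
    show "\<And>a b. g x a b = g x b a" by (rule gsym[OF x])
    show "\<And>a c. (\<Sum>b\<in>UNIV. g x a b * ginv g x b c) = (if a = c then 1 else 0)" by (rule ginv1[OF x])
    show "\<And>a c. (\<Sum>b\<in>UNIV. ginv g x a b * g x b c) = (if a = c then 1 else 0)" by (rule ginv2[OF x])
  qed
  have R: "Riem g x i' j' k' w = W.RR S c i' j' k' w" for i' j' k' w
    using R0 unfolding W.RR_def by simp
  have ric: "ricci g x j' k' = W.ric S c j' k'" for j' k'
    unfolding ricci_def W.ric_def using R by simp
  have scal: "scal g x = (\<Sum>j\<in>UNIV. \<Sum>k\<in>UNIV. ginv g x j k * W.ric S c j k)"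
    unfolding scal_def using ric by simp
  have N: "real CARD('i) = 2 * real n" using dim by simp
  show "weyl n g x i j k l = 0"
    using W.weyl_zero[OF N n2, of S c i j k l]
    unfolding weyl_def psi1_def pi1_def scal ric R by simp
qed

end


theorem proposition7p1:
  fixes U :: "(real^'i::finite) set"
    and g P :: "real^'i \<Rightarrow> 'i \<Rightarrow> 'i \<Rightarrow> real"
    and n :: nat
  assumes dim: "CARD('i) = 2 * n" and n2: "n \<ge> 2"
    and rap: "riem_almost_product U g P"
    and W1: "in_W1 n U g P"
    and flat: "\<forall>x\<in>U. \<forall>m i j k. curv (connD n g P) x m i j k = 0"
  shows "\<forall>x\<in>U. \<forall>i j k l. weyl n g x i j k l = 0"
proof -
  have "RAP U g P" using rap by (simp add: RAP_def)
  then show ?thesis by (rule RAP.main[OF _ dim n2 flat])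
qed

end
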